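(* Let $T:\mathbb{Z}_{\ge 0}\times\mathbb{Z}_{\ge 0}\to\mathbb{R}$ be the function defined by $T(n,0)=0$ for all $n\ge 0$, $T(0,q)=0$ for all $q\ge 0$, and, for all $n\ge 1$ and $q\ge 1$, $$T(n,q) \;=\; n+\frac{2}{n(q+1)}\sum_{j=0}^{n-1}\sum_{k=0}^{q} T(j,k).$$ Then for all integers $n\ge 0$ and $q\ge 1$, $$T(n,q)\;\le\; 2nH_q \;=\; O(n\log q),$$ where $H_q=\sum_{i=1}^{q} 1/i$ is the $q$-th harmonic number.
   Context: The recurrence models the average number of item comparisons needed to answer $q$ distinct selection queries (queries asking for the item of rank $k$) online on an initially unsorted array of $n$ distinct items, averaged over all input permutations (with the $q$ queries equally likely to split over the pivot in any of the $q+1$ ways), using Hoare's quickselect restricted to the unsorted subinterval containing the queried rank, with the pivot always chosen as the last item of the current subinterval and with all previously placed pivots remembered (so work already done by earlier queries is reused). The harmonic numbers satisfy $H_0=0$. *)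

theory Defs
  imports "HOL-Analysis.Analysis"
begin

function T :: "nat \<Rightarrow> nat \<Rightarrow> real" where
  "T n q = (if n = 0 \<or> q = 0 then 0
            else real n + 2 / (real n * real (q + 1)) *
                 (\<Sum>j<n. \<Sum>k\<le>q. T j k))"
  by auto
termination
  by (relation "Wellfounded.measure fst") auto

end

theory Submission
  imports Defs
begin

lemma sum_harm: "(\<Sum>k\<le>q. harm k :: real) = real (q+1) * harm (q+1) - real (q+1)"
proof (induction q)
  case 0 then show ?case by (simp add: harm_def)
next
  case (Suc q)
  have "harm (Suc q + 1) = (harm (Suc q) :: real) + inverse (real (Suc q + 1))"
    using harm_Suc[of "Suc q"] by simp
  then show ?case using Suc by (simp add: field_simps)
qed

lemma sum_lin: "(\<Sum>j<n. 2 * real j) = real n * (real n - 1)"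
  by (induction n) (auto simp: algebra_simps)

lemma harm_ge1: "q \<ge> 1 \<Longrightarrow> harm q \<ge> (1::real)"
proof (induction q rule: dec_induct)
  case base then show ?case by (simp add: harm_def)
next
  case (step m)
  have "inverse (real (Suc m)) \<ge> (0::real)" by simp
  have "harm (Suc m) = (harm m :: real) + inverse (real (Suc m))" by (rule harm_Suc)
  then show ?case using step(3) \<open>inverse (real (Suc m)) \<ge> 0\<close> by linarith
qed

lemma main: "\<forall>q. T n q \<le> 2 * real n * harm q"
proof (induction n rule: less_induct)
  case (less n)
  show ?case
  proof
    fix q
    show "T n q \<le> 2 * real n * harm q"
    proof (cases "n = 0 \<or> q = 0")
      case True then show ?thesis by (auto simp: harm_def)
    next
      case False
      hence n1: "n \<ge> 1" and q1: "q \<ge> 1" by auto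
      have eq: "T n q = real n + 2 / (real n * real (q + 1)) * (\<Sum>j<n. \<Sum>k\<le>q. T j k)"
        using False by simp
      have "(\<Sum>j<n. \<Sum>k\<le>q. T j k) \<le> (\<Sum>j<n. \<Sum>k\<le>q. 2 * real j * harm k)"
        using less by (intro sum_mono) auto
      also have "\<dots> = (\<Sum>j<n. 2 * real j) * (\<Sum>k\<le>q. harm k)"
        by (simp add: sum_product)
      also have "\<dots> = real n * (real n - 1) * (real (q+1) * harm (q+1) - real (q+1))"
        by (simp add: sum_lin sum_harm)
      finally have S: "(\<Sum>j<n. \<Sum>k\<le>q. T j k) \<le> real n * (real n - 1) * (real (q+1) * harm (q+1) - real (q+1))" .
      have c: "2 / (real n * real (q + 1)) \<ge> 0" by simp
      have "T n q \<le> real n + 2 / (real n * real (q + 1)) * (real n * (real n - 1) * (real (q+1) * harm (q+1) - real (q+1)))"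
        unfolding eq using mult_left_mono[OF S c] by simp
      also have "\<dots> = real n + 2 * (real n - 1) * (harm q + 1 / real (q+1) - 1)"
      proof -
        have hs: "harm (q+1) = (harm q :: real) + 1 / real (q+1)"
        proof -
          have "harm (Suc q) = (harm q :: real) + inverse (real (Suc q))" by (rule harm_Suc)
          then show ?thesis by (simp add: inverse_eq_divide)
        qed
        have "2 / (real n * real (q + 1)) * (real n * (real n - 1) * (real (q+1) * harm (q+1) - real (q+1)))
             = 2 * (real n - 1) * (harm (q+1) - 1)"
          using n1 by (simp add: field_simps del: of_nat_Suc)
        then show ?thesis by (simp only: hs)
      qed
      also have "\<dots> \<le> 2 * real n * harm q"
      proof -
        have a: "(real n - 1) / real (q+1) \<le> (real n - 1) / 2"
          using n1 q1 by (intro divide_left_mono) auto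
        have h: "harm q \<ge> (1::real)" using harm_ge1 q1 by simp
        have "real n + 2 * (real n - 1) * (harm q + 1 / real (q+1) - 1)
              = real n + 2 * (real n - 1) * harm q + 2 * ((real n - 1) / real (q+1)) - 2 * (real n - 1)"
          by (simp add: field_simps)
        then show ?thesis using a h n1 by (simp add: algebra_simps)
      qed
      finally show ?thesis .
    qed
  qed
qed

theorem mainTheorem1:
  fixes n q :: nat
  assumes "q \<ge> 1"
  shows "T n q \<le> 2 * real n * harm q"
  using main by blast

end
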